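(* Let $G=(V,E)$ be a finite connected graph with boundary $\partial G\subset V$, let $\alpha\in\Pi(\partial G)$, $p\in[0,1]$, $q>0$. Let $\widetilde E\subset E$ be such that for every $e\in\widetilde E$ there exists a path in $G\cup\alpha$ connecting the two endpoints of $e$ and using only edges of $E\setminus\widetilde E$. Let $\Gamma_{\widetilde E}(e)$ be the collection of such paths, and for $e\in\widetilde E$ set \[\widetilde\varepsilon_e:=|p'-p|\;\mathbb P^G_{\min(p,p')}\big(\exists\gamma\in\Gamma_{\widetilde E}(e)\text{ such that all edges of }\gamma\text{ are open}\big).\] Then: (1) if $p<p'$, then $\phi^\alpha_{G,p,q}\preceq\mathbb P^G_{(p'-\widetilde\varepsilon_e\mathbf 1_{e\in\widetilde E})_e}$; (2) if $p>p'$, then $\mathbb P^G_{(p'+\widetilde\varepsilon_e\mathbf 1_{e\in\widetilde E})_e}\preceq\phi^\alpha_{G,p,q}$.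
   Context: Configurations are $\omega\in\{0,1\}^E$; an edge $e$ is open if $\omega(e)=1$, closed otherwise. $\Pi(\partial G)$ denotes the set of partitions of $\partial G$; vertices in the same block of $\alpha$ are called wired. $G\cup\alpha$ is the (multi)graph obtained from $G$ by identifying wired vertices. $k(\omega,\alpha)$ is the number of connected components of the graph with vertex set $V$ and edge set the open edges of $\omega$, after identifying wired vertices. The FK measure is $\phi^\alpha_{G,p,q}(\omega)=Z^{-1}\big(\prod_{e\in E}p^{\omega(e)}(1-p)^{1-\omega(e)}\big)q^{k(\omega,\alpha)}$. Set $p':=\frac{p}{p+q(1-p)}$. $\mathbb P^G_{(p_e)}$ is the product measure on $\{0,1\}^E$ where edge $e$ is open independently with probability $p_e$ ($\mathbb P^G_s$ when $p_e\equiv s$). $\mu\preceq\mu'$ means $\mu(A)\le\mu'(A)$ for all increasing events $A$. *)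

theory Defs
  imports Complex_Main "HOL-Library.Disjoint_Sets"
begin

text \<open>Configurations omega in {0,1}^E are represented by the set
of open edges (a subset of E). alpha is a partition of the boundary.\<close>

definition graph_connected :: "'v set \<Rightarrow> 'e set \<Rightarrow> ('e \<Rightarrow> 'v \<times> 'v) \<Rightarrow> bool" where
  "graph_connected V E ends \<longleftrightarrow>
     (\<forall>u\<in>V. \<forall>v\<in>V. (u, v) \<in> {(x, y). \<exists>e\<in>E. ends e = (x, y) \<or> ends e = (y, x)}\<^sup>*)"

text \<open>The vertex of G \<union> alpha represented by v: its block if v is wired, else {v}.\<close>
definition wcls :: "'v set set \<Rightarrow> 'v \<Rightarrow> 'v set" where
  "wcls \<alpha> v = (if \<exists>b\<in>\<alpha>. v \<in> b then (THE b. b \<in> \<alpha> \<and> v \<in> b) else {v})"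

definition walk_GA :: "'v set \<Rightarrow> 'v set set \<Rightarrow> ('e \<Rightarrow> 'v \<times> 'v) \<Rightarrow> 'e set \<Rightarrow> 'v \<Rightarrow> 'v \<Rightarrow> 'e list \<Rightarrow> bool" where
  "walk_GA V \<alpha> ends F x y es \<longleftrightarrow>
     (\<exists>vs. length vs = Suc (length es) \<and> set vs \<subseteq> V \<and> set es \<subseteq> F \<and>
        wcls \<alpha> (hd vs) = wcls \<alpha> x \<and> wcls \<alpha> (last vs) = wcls \<alpha> y \<and>
        (\<forall>i<length es. {wcls \<alpha> (fst (ends (es ! i))), wcls \<alpha> (snd (ends (es ! i)))}
                         = {wcls \<alpha> (vs ! i), wcls \<alpha> (vs ! Suc i)}))"

definition Gamma :: "'v set \<Rightarrow> 'e set \<Rightarrow> ('e \<Rightarrow> 'v \<times> 'v) \<Rightarrow> 'v set set \<Rightarrow> 'e set \<Rightarrow> 'e \<Rightarrow> 'e list set" where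
  "Gamma V E ends \<alpha> Et e = {es. walk_GA V \<alpha> ends (E - Et) (fst (ends e)) (snd (ends e)) es}"

definition num_clusters :: "'v set \<Rightarrow> ('e \<Rightarrow> 'v \<times> 'v) \<Rightarrow> 'v set set \<Rightarrow> 'e set \<Rightarrow> nat" where
  "num_clusters V ends \<alpha> \<omega> = card (V // ((Id_on V \<union>
      {(u, v). u \<in> V \<and> v \<in> V \<and> ((\<exists>e\<in>\<omega>. ends e = (u, v) \<or> ends e = (v, u)) \<or> (\<exists>b\<in>\<alpha>. u \<in> b \<and> v \<in> b))})\<^sup>*))"

definition fk_weight :: "'v set \<Rightarrow> 'e set \<Rightarrow> ('e \<Rightarrow> 'v \<times> 'v) \<Rightarrow> 'v set set \<Rightarrow> real \<Rightarrow> real \<Rightarrow> 'e set \<Rightarrow> real" where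
  "fk_weight V E ends \<alpha> p q \<omega> =
     (\<Prod>e\<in>E. if e \<in> \<omega> then p else 1 - p) * q ^ num_clusters V ends \<alpha> \<omega>"

definition fk_prob :: "'v set \<Rightarrow> 'e set \<Rightarrow> ('e \<Rightarrow> 'v \<times> 'v) \<Rightarrow> 'v set set \<Rightarrow> real \<Rightarrow> real \<Rightarrow> 'e set set \<Rightarrow> real" where
  "fk_prob V E ends \<alpha> p q A =
     (\<Sum>\<omega>\<in>A. fk_weight V E ends \<alpha> p q \<omega>) / (\<Sum>\<omega>\<in>Pow E. fk_weight V E ends \<alpha> p q \<omega>)"

definition prod_prob :: "'e set \<Rightarrow> ('e \<Rightarrow> real) \<Rightarrow> 'e set set \<Rightarrow> real" where
  "prod_prob E pe A = (\<Sum>\<omega>\<in>A. \<Prod>e\<in>E. if e \<in> \<omega> then pe e else 1 - pe e)"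

definition increasing_event :: "'e set \<Rightarrow> 'e set set \<Rightarrow> bool" where
  "increasing_event E A \<longleftrightarrow> A \<subseteq> Pow E \<and> (\<forall>\<omega>\<in>A. \<forall>\<omega>'. \<omega> \<subseteq> \<omega>' \<and> \<omega>' \<subseteq> E \<longrightarrow> \<omega>' \<in> A)"

definition stoch_le :: "'e set \<Rightarrow> ('e set set \<Rightarrow> real) \<Rightarrow> ('e set set \<Rightarrow> real) \<Rightarrow> bool" where
  "stoch_le E \<mu> \<nu> \<longleftrightarrow> (\<forall>A. increasing_event E A \<longrightarrow> \<mu> A \<le> \<nu> A)"

end

theory Submission
  imports Defs
begin


lemma prod_prob_insert:
  assumes "finite F" "e \<notin> F" "X \<subseteq> Pow (insert e F)"
  shows "prod_prob (insert e F) r X =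
     r e * prod_prob F r {\<tau>\<in>Pow F. insert e \<tau> \<in> X} + (1 - r e) * prod_prob F r {\<tau>\<in>Pow F. \<tau> \<in> X}"
proof -
  let ?g = "\<lambda>\<omega>. \<Prod>f\<in>F. if f \<in> \<omega> then r f else 1 - r f"
  have split: "\<And>\<omega>. (\<Prod>f\<in>insert e F. if f \<in> \<omega> then r f else 1 - r f)
      = (if e \<in> \<omega> then r e else 1 - r e) * ?g \<omega>"
    using assms by (simp add: prod.insert)
  have gins: "\<And>\<tau>. ?g (insert e \<tau>) = ?g \<tau>"
    using assms(2) by (intro prod.cong) auto
  let ?X1 = "{\<tau>\<in>Pow F. insert e \<tau> \<in> X}" and ?X0 = "{\<tau>\<in>Pow F. \<tau> \<in> X}"
  have Xeq: "X = insert e ` ?X1 \<union> ?X0"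
  proof (rule set_eqI)
    fix \<omega> show "\<omega> \<in> X \<longleftrightarrow> \<omega> \<in> insert e ` ?X1 \<union> ?X0"
    proof
      assume h: "\<omega> \<in> X"
      show "\<omega> \<in> insert e ` ?X1 \<union> ?X0"
      proof (cases "e \<in> \<omega>")
        case True
        then have "\<omega> = insert e (\<omega> - {e})" by auto
        moreover have "\<omega> - {e} \<in> ?X1" using h True assms(3) by (auto simp: insert_absorb)
        ultimately show ?thesis by blast
      next
        case False then show ?thesis using h assms(3) by auto
      qed
    qed auto
  qed
  have fin1: "finite (insert e ` ?X1)" and fin0: "finite ?X0" using assms(1) by auto
  have disj: "insert e ` ?X1 \<inter> ?X0 = {}" using assms(2) by auto
  have inj: "inj_on (insert e) ?X1" using assms(2) by (auto simp: inj_on_def)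
  have "prod_prob (insert e F) r X = sum (\<lambda>\<omega>. (if e \<in> \<omega> then r e else 1 - r e) * ?g \<omega>) X"
    unfolding prod_prob_def using split by simp
  also have "\<dots> = sum (\<lambda>\<omega>. (if e \<in> \<omega> then r e else 1 - r e) * ?g \<omega>) (insert e ` ?X1)
       + sum (\<lambda>\<omega>. (if e \<in> \<omega> then r e else 1 - r e) * ?g \<omega>) ?X0"
    by (subst Xeq, rule sum.union_disjoint[OF fin1 fin0 disj])
  also have "sum (\<lambda>\<omega>. (if e \<in> \<omega> then r e else 1 - r e) * ?g \<omega>) (insert e ` ?X1)
      = sum (\<lambda>\<tau>. r e * ?g \<tau>) ?X1"
    apply (subst sum.reindex[OF inj])
    apply (rule sum.cong[OF refl])
    apply (simp only: comp_def gins)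
    apply simp
    done
  also have "sum (\<lambda>\<omega>. (if e \<in> \<omega> then r e else 1 - r e) * ?g \<omega>) ?X0 = sum (\<lambda>\<tau>. (1 - r e) * ?g \<tau>) ?X0"
    using assms(2) by (intro sum.cong) auto
  finally show ?thesis unfolding prod_prob_def by (simp add: sum_distrib_left)
qed

lemma prod_prob_marg:
  assumes "finite D" "finite F" "D \<inter> F = {}" "\<And>\<omega>. P \<omega> = P (\<omega> \<inter> F)"
  shows "prod_prob (F \<union> D) r {\<omega>\<in>Pow (F \<union> D). P \<omega>} = prod_prob F r {\<tau>\<in>Pow F. P \<tau>}"
  using assms(1,3)
proof (induction D rule: finite_induct)
  case empty then show ?case by simp
next
  case (insert d D)
  have fin: "finite (F \<union> D)" using insert assms by auto
  have dn: "d \<notin> F \<union> D" using insert by auto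
  have "prod_prob (F \<union> insert d D) r {\<omega>\<in>Pow (F \<union> insert d D). P \<omega>}
     = prod_prob (insert d (F \<union> D)) r {\<omega>\<in>Pow (insert d (F \<union> D)). P \<omega>}" by simp
  also have "\<dots> = r d * prod_prob (F \<union> D) r {\<tau>\<in>Pow (F \<union> D). insert d \<tau> \<in> {\<omega>\<in>Pow (insert d (F \<union> D)). P \<omega>}}
     + (1 - r d) * prod_prob (F \<union> D) r {\<tau>\<in>Pow (F \<union> D). \<tau> \<in> {\<omega>\<in>Pow (insert d (F \<union> D)). P \<omega>}}"
    by (rule prod_prob_insert[OF fin dn]) auto
  also have "{\<tau>\<in>Pow (F \<union> D). insert d \<tau> \<in> {\<omega>\<in>Pow (insert d (F \<union> D)). P \<omega>}} = {\<tau>\<in>Pow (F \<union> D). P \<tau>}"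
  proof -
    have "\<And>\<tau>. P (insert d \<tau>) = P \<tau>"
      using assms(4) insert.prems insert.hyps by (metis Int_insert_left_if0 disjoint_iff insertI1 Int_insert_left)
    then show ?thesis by auto
  qed
  also have "{\<tau>\<in>Pow (F \<union> D). \<tau> \<in> {\<omega>\<in>Pow (insert d (F \<union> D)). P \<omega>}} = {\<tau>\<in>Pow (F \<union> D). P \<tau>}" by auto
  finally show ?case using insert by (simp add: algebra_simps)
qed

lemma prod_prob_total:
  assumes "finite E"
  shows "prod_prob E r (Pow E) = 1"
  using prod_prob_marg[OF assms, of "{}" "\<lambda>_. True" r] by (simp add: prod_prob_def Pow_def)

lemma prod_prob_nonneg:
  assumes "\<forall>e\<in>E. 0 \<le> r e \<and> r e \<le> 1"
  shows "0 \<le> prod_prob E r X"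
  unfolding prod_prob_def using assms by (intro sum_nonneg prod_nonneg) auto

lemma prod_prob_mono:
  assumes "\<forall>e\<in>E. 0 \<le> r e \<and> r e \<le> 1" "finite Y" "X \<subseteq> Y"
  shows "prod_prob E r X \<le> prod_prob E r Y"
  unfolding prod_prob_def using assms by (intro sum_mono2 prod_nonneg) auto



lemma gen_upper:
  fixes w :: "'e set \<Rightarrow> real" and r :: "'e \<Rightarrow> real"
  assumes "finite E" "distinct L" "set L \<inter> S = {}" "S \<union> set L \<subseteq> E"
    and wnn: "\<forall>\<omega>\<in>Pow E. 0 \<le> w \<omega>"
    and r01: "\<forall>e\<in>set L. 0 \<le> r e \<and> r e \<le> 1"
    and mono: "\<forall>\<omega> \<omega>'. \<omega> \<in> A \<longrightarrow> \<omega> \<subseteq> \<omega>' \<longrightarrow> \<omega>' \<subseteq> S \<union> set L \<longrightarrow> \<omega>' \<in> A"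
    and cond: "\<forall>L1 e L2. L = L1 @ e # L2 \<longrightarrow> (\<forall>\<sigma>. \<sigma> \<subseteq> S \<union> set L1 \<longrightarrow>
        sum w {\<omega>\<in>Pow E. \<omega> \<inter> insert e (S \<union> set L1) = insert e \<sigma>}
          \<le> r e * sum w {\<omega>\<in>Pow E. \<omega> \<inter> (S \<union> set L1) = \<sigma>})"
    and "\<sigma> \<subseteq> S"
  shows "sum w {\<omega>\<in>Pow E. \<omega> \<inter> S = \<sigma> \<and> \<omega> \<inter> (S \<union> set L) \<in> A}
     \<le> sum w {\<omega>\<in>Pow E. \<omega> \<inter> S = \<sigma>} * prod_prob (set L) r {\<tau>\<in>Pow (set L). \<sigma> \<union> \<tau> \<in> A}"
  using assms(2-4) mono cond assms(9) r01
proof (induction L arbitrary: S \<sigma>)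
  case Nil
  show ?case
  proof (cases "\<sigma> \<in> A")
    case True
    have "{\<omega>\<in>Pow E. \<omega> \<inter> S = \<sigma> \<and> \<omega> \<inter> (S \<union> set []) \<in> A} = {\<omega>\<in>Pow E. \<omega> \<inter> S = \<sigma>}"
      using True by auto
    moreover have "{\<tau>\<in>Pow (set []). \<sigma> \<union> \<tau> \<in> A} = {{}}" using True by auto
    ultimately show ?thesis by (simp add: prod_prob_def)
  next
    case False
    have h1: "{\<omega>\<in>Pow E. \<omega> \<inter> S = \<sigma> \<and> \<omega> \<inter> (S \<union> set []) \<in> A} = {}"
      using False by auto
    have h2: "{\<tau>\<in>Pow (set []). \<sigma> \<union> \<tau> \<in> A} = {}" using False by auto
    show ?thesis unfolding h1 h2 prod_prob_def by simp
  qed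
next
  case (Cons e L')
  let ?S' = "insert e S"
  have eS: "e \<notin> S" using Cons.prems(2) by auto
  have eL: "e \<notin> set L'" using Cons.prems(1) by auto
  have eq: "?S' \<union> set L' = S \<union> set (e # L')" by auto
  have IH: "\<And>\<sigma>'. \<sigma>' \<subseteq> ?S' \<Longrightarrow> sum w {\<omega>\<in>Pow E. \<omega> \<inter> ?S' = \<sigma>' \<and> \<omega> \<inter> (S \<union> set (e # L')) \<in> A}
     \<le> sum w {\<omega>\<in>Pow E. \<omega> \<inter> ?S' = \<sigma>'} * prod_prob (set L') r {\<tau>\<in>Pow (set L'). \<sigma>' \<union> \<tau> \<in> A}"
  proof -
    fix \<sigma>' assume h: "\<sigma>' \<subseteq> ?S'"
    have c: "\<forall>L1 f L2. L' = L1 @ f # L2 \<longrightarrow> (\<forall>\<sigma>. \<sigma> \<subseteq> ?S' \<union> set L1 \<longrightarrow>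
        sum w {\<omega>\<in>Pow E. \<omega> \<inter> insert f (?S' \<union> set L1) = insert f \<sigma>}
          \<le> r f * sum w {\<omega>\<in>Pow E. \<omega> \<inter> (?S' \<union> set L1) = \<sigma>})"
    proof (intro allI impI)
      fix L1 f L2 \<sigma> assume a: "L' = L1 @ f # L2" "\<sigma> \<subseteq> ?S' \<union> set L1"
      have L: "e # L' = (e # L1) @ f # L2" using a by simp
      have sS: "?S' \<union> set L1 = S \<union> set (e # L1)" by auto
      have ss: "\<sigma> \<subseteq> S \<union> set (e # L1)" using a(2) sS by simp
      show "sum w {\<omega>\<in>Pow E. \<omega> \<inter> insert f (?S' \<union> set L1) = insert f \<sigma>}
          \<le> r f * sum w {\<omega>\<in>Pow E. \<omega> \<inter> (?S' \<union> set L1) = \<sigma>}"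
        unfolding sS using Cons.prems(5)[rule_format, OF L ss] .
    qed
    have m: "\<forall>\<omega> \<omega>'. \<omega> \<in> A \<longrightarrow> \<omega> \<subseteq> \<omega>' \<longrightarrow> \<omega>' \<subseteq> ?S' \<union> set L' \<longrightarrow> \<omega>' \<in> A"
      using Cons.prems(4) eq by simp
    have d: "distinct L'" using Cons.prems(1) by simp
    have dj: "set L' \<inter> ?S' = {}" using Cons.prems(1,2) by auto
    have sb: "?S' \<union> set L' \<subseteq> E" using Cons.prems(3) by auto
    have rr: "\<forall>f\<in>set L'. 0 \<le> r f \<and> r f \<le> 1" using Cons.prems(7) by simp
    show "?thesis \<sigma>'"
      using Cons.IH[of ?S' \<sigma>', OF d dj sb m c h rr] unfolding eq .

  qed
  let ?a = "prod_prob (set L') r {\<tau>\<in>Pow (set L'). insert e \<sigma> \<union> \<tau> \<in> A}"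
  let ?b = "prod_prob (set L') r {\<tau>\<in>Pow (set L'). \<sigma> \<union> \<tau> \<in> A}"
  let ?Wo = "sum w {\<omega>\<in>Pow E. \<omega> \<inter> ?S' = insert e \<sigma>}"
  let ?Wz = "sum w {\<omega>\<in>Pow E. \<omega> \<inter> ?S' = \<sigma>}"
  let ?W = "sum w {\<omega>\<in>Pow E. \<omega> \<inter> S = \<sigma>}"
  have r01': "\<forall>f\<in>set L'. 0 \<le> r f \<and> r f \<le> 1" using Cons.prems(7) by simp
  have i1: "sum w {\<omega>\<in>Pow E. \<omega> \<inter> ?S' = insert e \<sigma> \<and> \<omega> \<inter> (S \<union> set (e # L')) \<in> A} \<le> ?Wo * ?a"
    by (rule IH[OF insert_mono[OF Cons.prems(6)]])
  have i0: "sum w {\<omega>\<in>Pow E. \<omega> \<inter> ?S' = \<sigma> \<and> \<omega> \<inter> (S \<union> set (e # L')) \<in> A} \<le> ?Wz * ?b"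
    by (rule IH[OF subset_insertI2[OF Cons.prems(6)]])
  have es: "e \<notin> \<sigma>" using Cons.prems(6) eS by auto
  have splitset: "\<And>P. {\<omega>\<in>Pow E. \<omega> \<inter> S = \<sigma> \<and> P \<omega>} =
     {\<omega>\<in>Pow E. \<omega> \<inter> ?S' = insert e \<sigma> \<and> P \<omega>} \<union> {\<omega>\<in>Pow E. \<omega> \<inter> ?S' = \<sigma> \<and> P \<omega>}"
    using es eS by (auto simp: set_eq_iff)
  have splitsum: "\<And>P. sum w {\<omega>\<in>Pow E. \<omega> \<inter> S = \<sigma> \<and> P \<omega>} =
     sum w {\<omega>\<in>Pow E. \<omega> \<inter> ?S' = insert e \<sigma> \<and> P \<omega>} + sum w {\<omega>\<in>Pow E. \<omega> \<inter> ?S' = \<sigma> \<and> P \<omega>}"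
    apply (subst splitset)
    apply (rule sum.union_disjoint)
    using assms(1) apply simp
    using assms(1) apply simp
    using es by auto
  have WW: "?W = ?Wo + ?Wz" using splitsum[of "\<lambda>_. True"] by simp
  have W1le: "?Wo \<le> r e * ?W"
    using Cons.prems(5)[rule_format, of "[]" e L' \<sigma>] Cons.prems(6) by simp
  have W1nn: "0 \<le> ?Wo" "0 \<le> ?Wz" using wnn by (auto intro!: sum_nonneg)
  have bnn: "0 \<le> ?b" using r01' by (rule prod_prob_nonneg)
  have ba: "?b \<le> ?a"
  proof (rule prod_prob_mono[OF r01'])
    show "finite {\<tau>\<in>Pow (set L'). insert e \<sigma> \<union> \<tau> \<in> A}" by simp
    show "{\<tau>\<in>Pow (set L'). \<sigma> \<union> \<tau> \<in> A} \<subseteq> {\<tau>\<in>Pow (set L'). insert e \<sigma> \<union> \<tau> \<in> A}"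
    proof
      fix \<tau> assume t: "\<tau> \<in> {\<tau>\<in>Pow (set L'). \<sigma> \<union> \<tau> \<in> A}"
      have sub: "insert e \<sigma> \<union> \<tau> \<subseteq> S \<union> set (e # L')" using t Cons.prems(6) by auto
      have "insert e \<sigma> \<union> \<tau> \<in> A" by (rule Cons.prems(4)[rule_format, OF _ _ sub]) (use t in auto)
      then show "\<tau> \<in> {\<tau>\<in>Pow (set L'). insert e \<sigma> \<union> \<tau> \<in> A}" using t by simp
    qed
  qed
  have dec: "prod_prob (set (e # L')) r {\<tau>\<in>Pow (set (e # L')). \<sigma> \<union> \<tau> \<in> A} = r e * ?a + (1 - r e) * ?b"
  proof -
    have "prod_prob (insert e (set L')) r {\<tau>\<in>Pow (insert e (set L')). \<sigma> \<union> \<tau> \<in> A}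
      = r e * prod_prob (set L') r {\<tau>\<in>Pow (set L'). insert e \<tau> \<in> {\<tau>\<in>Pow (insert e (set L')). \<sigma> \<union> \<tau> \<in> A}}
       + (1 - r e) * prod_prob (set L') r {\<tau>\<in>Pow (set L'). \<tau> \<in> {\<tau>\<in>Pow (insert e (set L')). \<sigma> \<union> \<tau> \<in> A}}"
      by (rule prod_prob_insert[OF _ eL]) auto
    moreover have "{\<tau>\<in>Pow (set L'). insert e \<tau> \<in> {\<tau>\<in>Pow (insert e (set L')). \<sigma> \<union> \<tau> \<in> A}}
       = {\<tau>\<in>Pow (set L'). insert e \<sigma> \<union> \<tau> \<in> A}" by auto
    moreover have "{\<tau>\<in>Pow (set L'). \<tau> \<in> {\<tau>\<in>Pow (insert e (set L')). \<sigma> \<union> \<tau> \<in> A}}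
       = {\<tau>\<in>Pow (set L'). \<sigma> \<union> \<tau> \<in> A}" by auto
    ultimately show ?thesis by simp
  qed
  have "sum w {\<omega>\<in>Pow E. \<omega> \<inter> S = \<sigma> \<and> \<omega> \<inter> (S \<union> set (e # L')) \<in> A} \<le> ?Wo * ?a + ?Wz * ?b"
    by (simp only: splitsum) (rule add_mono[OF i1 i0])
  also have "\<dots> \<le> ?W * (r e * ?a + (1 - r e) * ?b)"
  proof -
    have "?Wo * ?a + ?Wz * ?b = ?W * ?b + ?Wo * (?a - ?b)" using WW by (simp add: algebra_simps)
    also have "\<dots> \<le> ?W * ?b + (r e * ?W) * (?a - ?b)"
      using W1le ba by (intro add_left_mono mult_right_mono) auto
    finally show ?thesis by (simp add: algebra_simps)
  qed
  finally show ?case using dec by simp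
qed


lemma gen_lower:
  fixes w :: "'e set \<Rightarrow> real" and r :: "'e \<Rightarrow> real"
  assumes "finite E" "distinct L" "set L \<inter> S = {}" "S \<union> set L \<subseteq> E"
    and wnn: "\<forall>\<omega>\<in>Pow E. 0 \<le> w \<omega>"
    and r01: "\<forall>e\<in>set L. 0 \<le> r e \<and> r e \<le> 1"
    and mono: "\<forall>\<omega> \<omega>'. \<omega> \<in> A \<longrightarrow> \<omega> \<subseteq> \<omega>' \<longrightarrow> \<omega>' \<subseteq> S \<union> set L \<longrightarrow> \<omega>' \<in> A"
    and cond: "\<forall>L1 e L2. L = L1 @ e # L2 \<longrightarrow> (\<forall>\<sigma>. \<sigma> \<subseteq> S \<union> set L1 \<longrightarrow>
        r e * sum w {\<omega>\<in>Pow E. \<omega> \<inter> (S \<union> set L1) = \<sigma>}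
          \<le> sum w {\<omega>\<in>Pow E. \<omega> \<inter> insert e (S \<union> set L1) = insert e \<sigma>})"
    and "\<sigma> \<subseteq> S"
  shows "sum w {\<omega>\<in>Pow E. \<omega> \<inter> S = \<sigma>} * prod_prob (set L) r {\<tau>\<in>Pow (set L). \<sigma> \<union> \<tau> \<in> A}
     \<le> sum w {\<omega>\<in>Pow E. \<omega> \<inter> S = \<sigma> \<and> \<omega> \<inter> (S \<union> set L) \<in> A}"
  using assms(2-4) mono cond assms(9) r01
proof (induction L arbitrary: S \<sigma>)
  case Nil
  show ?case
  proof (cases "\<sigma> \<in> A")
    case True
    have "{\<omega>\<in>Pow E. \<omega> \<inter> S = \<sigma> \<and> \<omega> \<inter> (S \<union> set []) \<in> A} = {\<omega>\<in>Pow E. \<omega> \<inter> S = \<sigma>}"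
      using True by auto
    moreover have "{\<tau>\<in>Pow (set []). \<sigma> \<union> \<tau> \<in> A} = {{}}" using True by auto
    ultimately show ?thesis by (simp add: prod_prob_def)
  next
    case False
    have h1: "{\<omega>\<in>Pow E. \<omega> \<inter> S = \<sigma> \<and> \<omega> \<inter> (S \<union> set []) \<in> A} = {}"
      using False by auto
    have h2: "{\<tau>\<in>Pow (set []). \<sigma> \<union> \<tau> \<in> A} = {}" using False by auto
    show ?thesis unfolding h1 h2 prod_prob_def by simp
  qed
next
  case (Cons e L')
  let ?S' = "insert e S"
  have eS: "e \<notin> S" using Cons.prems(2) by auto
  have eL: "e \<notin> set L'" using Cons.prems(1) by auto
  have eq: "?S' \<union> set L' = S \<union> set (e # L')" by auto
  have IH: "\<And>\<sigma>'. \<sigma>' \<subseteq> ?S' \<Longrightarrow> sum w {\<omega>\<in>Pow E. \<omega> \<inter> ?S' = \<sigma>'} * prod_prob (set L') r {\<tau>\<in>Pow (set L'). \<sigma>' \<union> \<tau> \<in> A}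
     \<le> sum w {\<omega>\<in>Pow E. \<omega> \<inter> ?S' = \<sigma>' \<and> \<omega> \<inter> (S \<union> set (e # L')) \<in> A}"
  proof -
    fix \<sigma>' assume h: "\<sigma>' \<subseteq> ?S'"
    have c: "\<forall>L1 f L2. L' = L1 @ f # L2 \<longrightarrow> (\<forall>\<sigma>. \<sigma> \<subseteq> ?S' \<union> set L1 \<longrightarrow>
        r f * sum w {\<omega>\<in>Pow E. \<omega> \<inter> (?S' \<union> set L1) = \<sigma>}
          \<le> sum w {\<omega>\<in>Pow E. \<omega> \<inter> insert f (?S' \<union> set L1) = insert f \<sigma>})"
    proof (intro allI impI)
      fix L1 f L2 \<sigma> assume a: "L' = L1 @ f # L2" "\<sigma> \<subseteq> ?S' \<union> set L1"
      have L: "e # L' = (e # L1) @ f # L2" using a by simp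
      have sS: "?S' \<union> set L1 = S \<union> set (e # L1)" by auto
      have ss: "\<sigma> \<subseteq> S \<union> set (e # L1)" using a(2) sS by simp
      show "r f * sum w {\<omega>\<in>Pow E. \<omega> \<inter> (?S' \<union> set L1) = \<sigma>}
          \<le> sum w {\<omega>\<in>Pow E. \<omega> \<inter> insert f (?S' \<union> set L1) = insert f \<sigma>}"
        unfolding sS using Cons.prems(5)[rule_format, OF L ss] .
    qed
    have m: "\<forall>\<omega> \<omega>'. \<omega> \<in> A \<longrightarrow> \<omega> \<subseteq> \<omega>' \<longrightarrow> \<omega>' \<subseteq> ?S' \<union> set L' \<longrightarrow> \<omega>' \<in> A"
      using Cons.prems(4) eq by simp
    have d: "distinct L'" using Cons.prems(1) by simp
    have dj: "set L' \<inter> ?S' = {}" using Cons.prems(1,2) by auto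
    have sb: "?S' \<union> set L' \<subseteq> E" using Cons.prems(3) by auto
    have rr: "\<forall>f\<in>set L'. 0 \<le> r f \<and> r f \<le> 1" using Cons.prems(7) by simp
    show "?thesis \<sigma>'"
      using Cons.IH[of ?S' \<sigma>', OF d dj sb m c h rr] unfolding eq .

  qed
  let ?a = "prod_prob (set L') r {\<tau>\<in>Pow (set L'). insert e \<sigma> \<union> \<tau> \<in> A}"
  let ?b = "prod_prob (set L') r {\<tau>\<in>Pow (set L'). \<sigma> \<union> \<tau> \<in> A}"
  let ?Wo = "sum w {\<omega>\<in>Pow E. \<omega> \<inter> ?S' = insert e \<sigma>}"
  let ?Wz = "sum w {\<omega>\<in>Pow E. \<omega> \<inter> ?S' = \<sigma>}"
  let ?W = "sum w {\<omega>\<in>Pow E. \<omega> \<inter> S = \<sigma>}"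
  have r01': "\<forall>f\<in>set L'. 0 \<le> r f \<and> r f \<le> 1" using Cons.prems(7) by simp
  have i1: "sum w {\<omega>\<in>Pow E. \<omega> \<inter> ?S' = insert e \<sigma> \<and> \<omega> \<inter> (S \<union> set (e # L')) \<in> A} \<ge> ?Wo * ?a"
    by (rule IH[OF insert_mono[OF Cons.prems(6)]])
  have i0: "sum w {\<omega>\<in>Pow E. \<omega> \<inter> ?S' = \<sigma> \<and> \<omega> \<inter> (S \<union> set (e # L')) \<in> A} \<ge> ?Wz * ?b"
    by (rule IH[OF subset_insertI2[OF Cons.prems(6)]])
  have es: "e \<notin> \<sigma>" using Cons.prems(6) eS by auto
  have splitset: "\<And>P. {\<omega>\<in>Pow E. \<omega> \<inter> S = \<sigma> \<and> P \<omega>} =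
     {\<omega>\<in>Pow E. \<omega> \<inter> ?S' = insert e \<sigma> \<and> P \<omega>} \<union> {\<omega>\<in>Pow E. \<omega> \<inter> ?S' = \<sigma> \<and> P \<omega>}"
    using es eS by (auto simp: set_eq_iff)
  have splitsum: "\<And>P. sum w {\<omega>\<in>Pow E. \<omega> \<inter> S = \<sigma> \<and> P \<omega>} =
     sum w {\<omega>\<in>Pow E. \<omega> \<inter> ?S' = insert e \<sigma> \<and> P \<omega>} + sum w {\<omega>\<in>Pow E. \<omega> \<inter> ?S' = \<sigma> \<and> P \<omega>}"
    apply (subst splitset)
    apply (rule sum.union_disjoint)
    using assms(1) apply simp
    using assms(1) apply simp
    using es by auto
  have WW: "?W = ?Wo + ?Wz" using splitsum[of "\<lambda>_. True"] by simp
  have W1le: "?Wo \<ge> r e * ?W"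
    using Cons.prems(5)[rule_format, of "[]" e L' \<sigma>] Cons.prems(6) by simp
  have W1nn: "0 \<le> ?Wo" "0 \<le> ?Wz" using wnn by (auto intro!: sum_nonneg)
  have bnn: "0 \<le> ?b" using r01' by (rule prod_prob_nonneg)
  have ba: "?b \<le> ?a"
  proof (rule prod_prob_mono[OF r01'])
    show "finite {\<tau>\<in>Pow (set L'). insert e \<sigma> \<union> \<tau> \<in> A}" by simp
    show "{\<tau>\<in>Pow (set L'). \<sigma> \<union> \<tau> \<in> A} \<subseteq> {\<tau>\<in>Pow (set L'). insert e \<sigma> \<union> \<tau> \<in> A}"
    proof
      fix \<tau> assume t: "\<tau> \<in> {\<tau>\<in>Pow (set L'). \<sigma> \<union> \<tau> \<in> A}"
      have sub: "insert e \<sigma> \<union> \<tau> \<subseteq> S \<union> set (e # L')" using t Cons.prems(6) by auto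
      have "insert e \<sigma> \<union> \<tau> \<in> A" by (rule Cons.prems(4)[rule_format, OF _ _ sub]) (use t in auto)
      then show "\<tau> \<in> {\<tau>\<in>Pow (set L'). insert e \<sigma> \<union> \<tau> \<in> A}" using t by simp
    qed
  qed
  have dec: "prod_prob (set (e # L')) r {\<tau>\<in>Pow (set (e # L')). \<sigma> \<union> \<tau> \<in> A} = r e * ?a + (1 - r e) * ?b"
  proof -
    have "prod_prob (insert e (set L')) r {\<tau>\<in>Pow (insert e (set L')). \<sigma> \<union> \<tau> \<in> A}
      = r e * prod_prob (set L') r {\<tau>\<in>Pow (set L'). insert e \<tau> \<in> {\<tau>\<in>Pow (insert e (set L')). \<sigma> \<union> \<tau> \<in> A}}
       + (1 - r e) * prod_prob (set L') r {\<tau>\<in>Pow (set L'). \<tau> \<in> {\<tau>\<in>Pow (insert e (set L')). \<sigma> \<union> \<tau> \<in> A}}"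
      by (rule prod_prob_insert[OF _ eL]) auto
    moreover have "{\<tau>\<in>Pow (set L'). insert e \<tau> \<in> {\<tau>\<in>Pow (insert e (set L')). \<sigma> \<union> \<tau> \<in> A}}
       = {\<tau>\<in>Pow (set L'). insert e \<sigma> \<union> \<tau> \<in> A}" by auto
    moreover have "{\<tau>\<in>Pow (set L'). \<tau> \<in> {\<tau>\<in>Pow (insert e (set L')). \<sigma> \<union> \<tau> \<in> A}}
       = {\<tau>\<in>Pow (set L'). \<sigma> \<union> \<tau> \<in> A}" by auto
    ultimately show ?thesis by simp
  qed
  have "sum w {\<omega>\<in>Pow E. \<omega> \<inter> S = \<sigma> \<and> \<omega> \<inter> (S \<union> set (e # L')) \<in> A} \<ge> ?Wo * ?a + ?Wz * ?b"
    by (simp only: splitsum) (rule add_mono[OF i1 i0])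
  moreover have "?Wo * ?a + ?Wz * ?b \<ge> ?W * (r e * ?a + (1 - r e) * ?b)"
  proof -
    have "?Wo * ?a + ?Wz * ?b = ?W * ?b + ?Wo * (?a - ?b)" using WW by (simp add: algebra_simps)
    also have "\<dots> \<ge> ?W * ?b + (r e * ?W) * (?a - ?b)"
      using W1le ba by (intro add_left_mono mult_right_mono) auto
    finally show ?thesis by (simp add: algebra_simps)
  qed
  ultimately show ?case using dec by simp
qed



lemma card_quot_insert:
  fixes R :: "('v \<times> 'v) set"
  assumes "finite V" "sym R" "a \<in> V" "b \<in> V"
  defines "R' \<equiv> R \<union> {(a, b), (b, a)}"
  shows "card (V // R'\<^sup>*) \<le> card (V // R\<^sup>*)"
    and "card (V // R\<^sup>*) \<le> card (V // R'\<^sup>*) + 1"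
    and "(a, b) \<in> R\<^sup>* \<Longrightarrow> R'\<^sup>* = R\<^sup>*"
proof -
  have sub: "R\<^sup>* \<subseteq> R'\<^sup>*" unfolding R'_def by (rule rtrancl_mono) auto
  have symR: "sym (R\<^sup>*)" using assms(2) by (rule sym_rtrancl)
  have finq: "finite (V // R\<^sup>*)" "finite (V // R'\<^sup>*)" using assms(1) unfolding quotient_def by auto
  have cl: "\<And>x. R'\<^sup>* `` (R\<^sup>* `` {x}) = R'\<^sup>* `` {x}"
  proof
    fix x show "R'\<^sup>* `` (R\<^sup>* `` {x}) \<subseteq> R'\<^sup>* `` {x}"
      using sub by (auto intro: rtrancl_trans)
    show "R'\<^sup>* `` {x} \<subseteq> R'\<^sup>* `` (R\<^sup>* `` {x})" by auto
  qed
  have "V // R'\<^sup>* = (\<lambda>X. R'\<^sup>* `` X) ` (V // R\<^sup>*)"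
    unfolding quotient_def using cl by auto
  then show "card (V // R'\<^sup>*) \<le> card (V // R\<^sup>*)"
    using card_image_le[OF finq(1)] by simp
  have same: "R\<^sup>* `` {x} = R'\<^sup>* `` {x}" if x: "(x, a) \<notin> R\<^sup>*" "(x, b) \<notin> R\<^sup>*" for x
  proof
    show "R\<^sup>* `` {x} \<subseteq> R'\<^sup>* `` {x}" using sub by auto
    have "(x, y) \<in> R\<^sup>*" if "(x, y) \<in> R'\<^sup>*" for y
      using that
    proof (induction rule: rtrancl_induct)
      case base then show ?case by simp
    next
      case (step y z)
      show ?case
      proof (cases "(y, z) \<in> R")
        case True then show ?thesis using step by (auto intro: rtrancl_into_rtrancl)
      next
        case False
        then have "y = a \<or> y = b" using step(2) unfolding R'_def by auto
        then show ?thesis using step(3) x by auto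
      qed
    qed
    then show "R'\<^sup>* `` {x} \<subseteq> R\<^sup>* `` {x}" by auto
  qed
  have "V // R\<^sup>* \<subseteq> insert (R\<^sup>* `` {a}) (insert (R\<^sup>* `` {b}) (V // R'\<^sup>* - {R'\<^sup>* `` {a}}))"
  proof
    fix X assume "X \<in> V // R\<^sup>*"
    then obtain x where x: "x \<in> V" "X = R\<^sup>* `` {x}" unfolding quotient_def by auto
    show "X \<in> insert (R\<^sup>* `` {a}) (insert (R\<^sup>* `` {b}) (V // R'\<^sup>* - {R'\<^sup>* `` {a}}))"
    proof (cases "(x, a) \<in> R\<^sup>* \<or> (x, b) \<in> R\<^sup>*")
      case True
      then have "(a, x) \<in> R\<^sup>* \<or> (b, x) \<in> R\<^sup>*" using symR by (auto dest: symD)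
      then have "X = R\<^sup>* `` {a} \<or> X = R\<^sup>* `` {b}"
        using x(2) symR by (auto intro: rtrancl_trans dest: symD)
      then show ?thesis by auto
    next
      case False
      then have s: "X = R'\<^sup>* `` {x}" using same x by auto
      have "a \<notin> X" using False x(2) by auto
      moreover have "a \<in> R'\<^sup>* `` {a}" by auto
      ultimately have "X \<noteq> R'\<^sup>* `` {a}" by auto
      moreover have "X \<in> V // R'\<^sup>*" using s x(1) unfolding quotient_def by auto
      ultimately show ?thesis by auto
    qed
  qed
  then have c1: "card (V // R\<^sup>*) \<le> card (insert (R\<^sup>* `` {a}) (insert (R\<^sup>* `` {b}) (V // R'\<^sup>* - {R'\<^sup>* `` {a}})))"
    using finq by (intro card_mono) auto
  have c2: "card (insert (R\<^sup>* `` {a}) (insert (R\<^sup>* `` {b}) (V // R'\<^sup>* - {R'\<^sup>* `` {a}}))) \<le> card (V // R'\<^sup>* - {R'\<^sup>* `` {a}}) + 2"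
    using finq by (auto simp: card_insert_if)
  have mem: "R'\<^sup>* `` {a} \<in> V // R'\<^sup>*" using assms(3) by (rule quotientI)
  have c3: "card (V // R'\<^sup>* - {R'\<^sup>* `` {a}}) = card (V // R'\<^sup>*) - 1"
    using mem finq by (simp add: card_Diff_singleton)
  have c4: "card (V // R'\<^sup>*) \<ge> 1"
    using finq mem by (metis card_0_eq empty_iff less_one not_le)
  show "card (V // R\<^sup>*) \<le> card (V // R'\<^sup>*) + 1" using c1 c2 c3 c4 by linarith
next
  assume ab: "(a, b) \<in> R\<^sup>*"
  have "(b, a) \<in> R\<^sup>*" using ab sym_rtrancl[OF assms(2)] by (auto dest: symD)
  then have "R' \<subseteq> R\<^sup>*" using ab unfolding R'_def by auto
  then show "R'\<^sup>* = R\<^sup>*" unfolding R'_def by (rule rtrancl_subset[rotated]) auto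
qed



definition crel :: "'v set \<Rightarrow> ('e \<Rightarrow> 'v \<times> 'v) \<Rightarrow> 'v set set \<Rightarrow> 'e set \<Rightarrow> ('v \<times> 'v) set" where
  "crel V ends \<alpha> \<omega> = Id_on V \<union> {(u, v). u \<in> V \<and> v \<in> V \<and> ((\<exists>e\<in>\<omega>. ends e = (u, v) \<or> ends e = (v, u)) \<or> (\<exists>b\<in>\<alpha>. u \<in> b \<and> v \<in> b))}"

lemma num_clusters_crel: "num_clusters V ends \<alpha> \<omega> = card (V // (crel V ends \<alpha> \<omega>)\<^sup>*)"
  by (simp add: num_clusters_def crel_def)

lemma crel_sym: "sym (crel V ends \<alpha> \<omega>)"
  unfolding crel_def sym_def by auto

lemma crel_insert:
  assumes "fst (ends e) \<in> V" "snd (ends e) \<in> V"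
  shows "crel V ends \<alpha> (insert e \<omega>) = crel V ends \<alpha> \<omega> \<union> {(fst (ends e), snd (ends e)), (snd (ends e), fst (ends e))}"
  using assms unfolding crel_def by (cases "ends e") auto

lemma crel_mono: "\<omega> \<subseteq> \<omega>' \<Longrightarrow> crel V ends \<alpha> \<omega> \<subseteq> crel V ends \<alpha> \<omega>'"
  unfolding crel_def by blast

lemma wcls_block:
  assumes "partition_on B \<alpha>" "b \<in> \<alpha>" "u \<in> b"
  shows "wcls \<alpha> u = b"
proof -
  have uniq: "b' = b" if "b' \<in> \<alpha>" "u \<in> b'" for b'
  proof (rule ccontr)
    assume "b' \<noteq> b"
    then have "b' \<inter> b = {}" by (rule disjointD[OF partition_onD2[OF assms(1)] that(1) assms(2)])
    then show False using that(2) assms(3) by auto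
  qed
  have "(THE b. b \<in> \<alpha> \<and> u \<in> b) = b"
    apply (rule the_equality)
    using assms(2,3) apply simp
    using uniq by simp
  moreover have "\<exists>b\<in>\<alpha>. u \<in> b" using assms(2,3) by auto
  ultimately show ?thesis unfolding wcls_def by simp
qed

lemma wcls_rel:
  assumes "partition_on B \<alpha>" "u \<in> V" "v \<in> V" "wcls \<alpha> u = wcls \<alpha> v"
  shows "(u, v) \<in> crel V ends \<alpha> \<omega>"
proof (cases "\<exists>b\<in>\<alpha>. u \<in> b")
  case True
  then obtain b where b: "b \<in> \<alpha>" "u \<in> b" by auto
  have wu: "wcls \<alpha> u = b" by (rule wcls_block[OF assms(1) b])
  show ?thesis
  proof (cases "\<exists>b\<in>\<alpha>. v \<in> b")
    case True
    then obtain b' where b': "b' \<in> \<alpha>" "v \<in> b'" by auto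
    have "wcls \<alpha> v = b'" by (rule wcls_block[OF assms(1) b'])
    then have "v \<in> b" using wu assms(4) b' by simp
    then show ?thesis using b assms(2,3) unfolding crel_def by auto
  next
    case False
    then have "wcls \<alpha> v = {v}" unfolding wcls_def by auto
    then have "{v} = b" using wu assms(4) by simp
    then have "v \<in> b" by auto
    then show ?thesis using False b by auto
  qed
next
  case False
  then have wu: "wcls \<alpha> u = {u}" unfolding wcls_def by auto
  show ?thesis
  proof (cases "\<exists>b\<in>\<alpha>. v \<in> b")
    case True
    then obtain b' where b': "b' \<in> \<alpha>" "v \<in> b'" by auto
    have "wcls \<alpha> v = b'" by (rule wcls_block[OF assms(1) b'])
    then have "{u} = b'" using wu assms(4) by simp
    then have "u \<in> b'" by auto
    then show ?thesis using False b' by auto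
  next
    case False
    then have "wcls \<alpha> v = {v}" unfolding wcls_def by auto
    then have "u = v" using wu assms(4) by simp
    then show ?thesis using assms(2) unfolding crel_def by auto
  qed
qed

lemma walk_rel:
  assumes "partition_on B \<alpha>" "walk_GA V \<alpha> ends F x y es" "set es \<subseteq> \<omega>" "x \<in> V" "y \<in> V"
    and ends: "\<forall>e\<in>\<omega>. fst (ends e) \<in> V \<and> snd (ends e) \<in> V"
  shows "(x, y) \<in> (crel V ends \<alpha> \<omega>)\<^sup>*"
proof -
  let ?R = "crel V ends \<alpha> \<omega>"
  obtain vs where vs: "length vs = Suc (length es)" "set vs \<subseteq> V"
    "set es \<subseteq> F" "wcls \<alpha> (hd vs) = wcls \<alpha> x" "wcls \<alpha> (last vs) = wcls \<alpha> y"
    "\<forall>i<length es. {wcls \<alpha> (fst (ends (es ! i))), wcls \<alpha> (snd (ends (es ! i)))}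
                         = {wcls \<alpha> (vs ! i), wcls \<alpha> (vs ! Suc i)}"
    using assms(2) unfolding walk_GA_def
    apply (elim exE conjE)
    apply (rule that)
    apply assumption+
    done
  have inV: "\<And>i. i \<le> length es \<Longrightarrow> vs ! i \<in> V" using vs(1,2) by (auto intro: nth_mem)
  have stepi: "(vs ! i, vs ! Suc i) \<in> ?R\<^sup>*" if i: "i < length es" for i
  proof -
    let ?c = "fst (ends (es ! i))" and ?d = "snd (ends (es ! i))"
    have ein: "es ! i \<in> \<omega>" using i assms(3) by auto
    have cd: "?c \<in> V" "?d \<in> V" using ein ends by auto
    have cdR: "(?c, ?d) \<in> ?R" "(?d, ?c) \<in> ?R" using ein cd unfolding crel_def
      by (auto intro!: bexI[of _ "es ! i"])
    have vi: "vs ! i \<in> V" "vs ! Suc i \<in> V" using inV i by auto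
    have "(wcls \<alpha> ?c = wcls \<alpha> (vs ! i) \<and> wcls \<alpha> ?d = wcls \<alpha> (vs ! Suc i)) \<or>
          (wcls \<alpha> ?c = wcls \<alpha> (vs ! Suc i) \<and> wcls \<alpha> ?d = wcls \<alpha> (vs ! i))"
      using vs(6) i by (auto simp: doubleton_eq_iff)
    then show ?thesis
    proof
      assume h: "wcls \<alpha> ?c = wcls \<alpha> (vs ! i) \<and> wcls \<alpha> ?d = wcls \<alpha> (vs ! Suc i)"
      have A: "(vs ! i, ?c) \<in> ?R" using wcls_rel[OF assms(1) vi(1) cd(1)] h by simp
      have C: "(?d, vs ! Suc i) \<in> ?R" using wcls_rel[OF assms(1) cd(2) vi(2)] h by simp
      show ?thesis by (rule rtrancl_trans[OF rtrancl_trans[OF r_into_rtrancl[OF A] r_into_rtrancl[OF cdR(1)]] r_into_rtrancl[OF C]])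
    next
      assume h: "wcls \<alpha> ?c = wcls \<alpha> (vs ! Suc i) \<and> wcls \<alpha> ?d = wcls \<alpha> (vs ! i)"
      have A: "(vs ! i, ?d) \<in> ?R" using wcls_rel[OF assms(1) vi(1) cd(2)] h by simp
      have C: "(?c, vs ! Suc i) \<in> ?R" using wcls_rel[OF assms(1) cd(1) vi(2)] h by simp
      show ?thesis by (rule rtrancl_trans[OF rtrancl_trans[OF r_into_rtrancl[OF A] r_into_rtrancl[OF cdR(2)]] r_into_rtrancl[OF C]])
    qed
  qed
  have chain: "(vs ! 0, vs ! i) \<in> ?R\<^sup>*" if "i \<le> length es" for i
    using that
  proof (induction i)
    case 0 then show ?case by simp
  next
    case (Suc i)
    then show ?case using stepi[of i] by (auto intro: rtrancl_trans)
  qed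
  have hd: "hd vs = vs ! 0" using vs(1) by (cases vs) auto
  have lst: "last vs = vs ! length es" using vs(1) by (subst last_conv_nth) auto
  have A: "(x, hd vs) \<in> ?R" using wcls_rel[OF assms(1) assms(4), of "hd vs"] vs(4) inV[of 0] hd by simp
  have C: "(last vs, y) \<in> ?R" using wcls_rel[OF assms(1) _ assms(5), of "last vs"] vs(5) inV[of "length es"] lst by simp
  have B: "(hd vs, last vs) \<in> ?R\<^sup>*" using chain[of "length es"] hd lst by simp
  show ?thesis by (rule rtrancl_trans[OF rtrancl_trans[OF r_into_rtrancl[OF A] B] r_into_rtrancl[OF C]])
qed



lemma fkw_nonneg:
  assumes "0 \<le> p" "p \<le> 1" "q > 0"
  shows "0 \<le> fk_weight V E ends \<alpha> p q \<omega>"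
  unfolding fk_weight_def using assms by (intro mult_nonneg_nonneg prod_nonneg) auto

lemma fkw_pos:
  assumes "0 < p" "p < 1" "q > 0"
  shows "0 < fk_weight V E ends \<alpha> p q \<omega>"
  unfolding fk_weight_def using assms by (intro mult_pos_pos prod_pos) auto

lemma pp:
  assumes "finite V" "finite E" "\<forall>e\<in>E. fst (ends e) \<in> V \<and> snd (ends e) \<in> V" "e \<in> E" "\<omega> \<subseteq> E - {e}"
    "0 \<le> p" "p \<le> 1" "q > 0"
  shows "\<exists>c. (c = p \<or> c = p / (p + q * (1 - p))) \<and>
     ((fst (ends e), snd (ends e)) \<in> (crel V ends \<alpha> \<omega>)\<^sup>* \<longrightarrow> c = p) \<and>
     fk_weight V E ends \<alpha> p q (insert e \<omega>) = c * (fk_weight V E ends \<alpha> p q (insert e \<omega>) + fk_weight V E ends \<alpha> p q \<omega>)"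
proof -
  let ?X = "\<Prod>f\<in>E-{e}. if f \<in> \<omega> then p else 1 - p"
  have enw: "e \<notin> \<omega>" using assms(5) by auto
  have X1: "(\<Prod>f\<in>E-{e}. if f \<in> insert e \<omega> then p else 1 - p) = ?X"
    by (rule prod.cong) auto
  have P1: "(\<Prod>f\<in>E. if f \<in> insert e \<omega> then p else 1 - p) = p * ?X"
    using prod.remove[OF assms(2) assms(4), of "\<lambda>f. if f \<in> insert e \<omega> then p else 1 - p"] X1 by simp
  have P0: "(\<Prod>f\<in>E. if f \<in> \<omega> then p else 1 - p) = (1 - p) * ?X"
    using prod.remove[OF assms(2) assms(4), of "\<lambda>f. if f \<in> \<omega> then p else 1 - p"] enw by simp
  let ?a = "fst (ends e)" and ?b = "snd (ends e)"
  have ab: "?a \<in> V" "?b \<in> V" using assms(3,4) by auto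
  let ?R = "crel V ends \<alpha> \<omega>"
  have Rins: "crel V ends \<alpha> (insert e \<omega>) = ?R \<union> {(?a, ?b), (?b, ?a)}" by (rule crel_insert[of ends e V, OF ab])
  let ?k1 = "num_clusters V ends \<alpha> (insert e \<omega>)" and ?k0 = "num_clusters V ends \<alpha> \<omega>"
  have k: "?k1 \<le> ?k0" "?k0 \<le> ?k1 + 1" "(?a, ?b) \<in> ?R\<^sup>* \<Longrightarrow> ?k1 = ?k0"
    unfolding num_clusters_crel Rins
    using card_quot_insert[OF assms(1) crel_sym[of V ends \<alpha> \<omega>] ab] by auto
  have w1: "fk_weight V E ends \<alpha> p q (insert e \<omega>) = p * ?X * q ^ ?k1"
    unfolding fk_weight_def P1 ..
  have w0: "fk_weight V E ends \<alpha> p q \<omega> = (1 - p) * ?X * q ^ ?k0"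
    unfolding fk_weight_def P0 ..
  have D: "p + q * (1 - p) > 0"
  proof (cases "p = 0")
    case True then show ?thesis using assms by simp
  next
    case False then have "p > 0" using assms by simp
    moreover have "q * (1 - p) \<ge> 0" using assms by simp
    ultimately show ?thesis by linarith
  qed
  show ?thesis
  proof (cases "?k0 = ?k1")
    case True
    have "fk_weight V E ends \<alpha> p q (insert e \<omega>) = p * (fk_weight V E ends \<alpha> p q (insert e \<omega>) + fk_weight V E ends \<alpha> p q \<omega>)"
      unfolding w1 w0 True by (simp add: algebra_simps)
    then show ?thesis by blast
  next
    case False
    then have k01: "?k0 = Suc ?k1" using k by simp
    have "fk_weight V E ends \<alpha> p q (insert e \<omega>) = p / (p + q * (1 - p)) * (fk_weight V E ends \<alpha> p q (insert e \<omega>) + fk_weight V E ends \<alpha> p q \<omega>)"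
      unfolding w1 w0 k01 using D by (simp add: field_simps)
    moreover have "(?a, ?b) \<notin> ?R\<^sup>*" using k(3) False by auto
    ultimately show ?thesis by blast
  qed
qed



lemma pair_split:
  fixes f :: "'e set \<Rightarrow> real"
  assumes "finite E" "e \<in> E" "e \<notin> K" "\<sigma> \<subseteq> K"
  shows "sum f {\<omega>\<in>Pow E. \<omega> \<inter> insert e K = insert e \<sigma>} = sum (\<lambda>\<eta>. f (insert e \<eta>)) {\<eta>\<in>Pow (E - {e}). \<eta> \<inter> K = \<sigma>}"
    and "sum f {\<omega>\<in>Pow E. \<omega> \<inter> K = \<sigma>} = sum (\<lambda>\<eta>. f (insert e \<eta>) + f \<eta>) {\<eta>\<in>Pow (E - {e}). \<eta> \<inter> K = \<sigma>}"
proof -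
  let ?Q = "{\<eta>\<in>Pow (E - {e}). \<eta> \<inter> K = \<sigma>}"
  have es: "e \<notin> \<sigma>" using assms by auto
  have inj: "inj_on (insert e) ?Q" unfolding inj_on_def by auto
  have img: "{\<omega>\<in>Pow E. \<omega> \<inter> insert e K = insert e \<sigma>} = insert e ` ?Q"
  proof (rule set_eqI, rule iffI)
    fix \<omega> assume h: "\<omega> \<in> {\<omega>\<in>Pow E. \<omega> \<inter> insert e K = insert e \<sigma>}"
    then have ew: "e \<in> \<omega>" by auto
    have "\<omega> - {e} \<in> ?Q" using h assms(3) es by (auto simp: set_eq_iff)
    moreover have "\<omega> = insert e (\<omega> - {e})" using ew by auto
    ultimately show "\<omega> \<in> insert e ` ?Q" by (rule rev_image_eqI)
  next
    fix \<omega> assume "\<omega> \<in> insert e ` ?Q"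
    then show "\<omega> \<in> {\<omega>\<in>Pow E. \<omega> \<inter> insert e K = insert e \<sigma>}" using assms(2,3) by auto
  qed
  show 1: "sum f {\<omega>\<in>Pow E. \<omega> \<inter> insert e K = insert e \<sigma>} = sum (\<lambda>\<eta>. f (insert e \<eta>)) ?Q"
    unfolding img by (subst sum.reindex[OF inj]) simp
  have un: "{\<omega>\<in>Pow E. \<omega> \<inter> K = \<sigma>} = {\<omega>\<in>Pow E. \<omega> \<inter> insert e K = insert e \<sigma>} \<union> ?Q"
    using assms(3) es by (auto simp: set_eq_iff)
  have dj: "{\<omega>\<in>Pow E. \<omega> \<inter> insert e K = insert e \<sigma>} \<inter> ?Q = {}" by auto
  have "sum f {\<omega>\<in>Pow E. \<omega> \<inter> K = \<sigma>} = sum f {\<omega>\<in>Pow E. \<omega> \<inter> insert e K = insert e \<sigma>} + sum f ?Q"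
    unfolding un by (rule sum.union_disjoint) (use assms(1) dj in auto)
  then show "sum f {\<omega>\<in>Pow E. \<omega> \<inter> K = \<sigma>} = sum (\<lambda>\<eta>. f (insert e \<eta>) + f \<eta>) ?Q"
    using 1 by (simp add: sum.distrib)
qed



locale fkset =
  fixes V :: "'v set" and E :: "'e set" and ends :: "'e \<Rightarrow> 'v \<times> 'v"
    and B :: "'v set" and \<alpha> :: "'v set set" and p q :: real and Et :: "'e set"
    and p' :: real and w :: "'e set \<Rightarrow> real"
  assumes fV: "finite V" and fE: "finite E"
    and endsV: "\<forall>e\<in>E. fst (ends e) \<in> V \<and> snd (ends e) \<in> V"
    and part: "partition_on B \<alpha>" and p0: "0 \<le> p" and p1: "p \<le> 1" and q0: "q > 0"
    and EtE: "Et \<subseteq> E"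
    and p'_eq: "p' = p / (p + q * (1 - p))"
    and w_eq: "w = fk_weight V E ends \<alpha> p q"
begin

lemma D: "p + q * (1 - p) > 0"
proof (cases "p = 0")
  case True then show ?thesis using q0 by simp
next
  case False then have "p > 0" using p0 by simp
  moreover have "q * (1 - p) \<ge> 0" using q0 p1 by simp
  ultimately show ?thesis by linarith
qed

lemma p'01: "0 \<le> p'" "p' \<le> 1"
  using D p0 p1 q0 unfolding p'_eq by (auto simp: field_simps)

lemma wnn: "0 \<le> w \<omega>"
  unfolding w_eq by (rule fkw_nonneg[OF p0 p1 q0])

lemma Gamma_sub: "\<gamma> \<in> Gamma V E ends \<alpha> Et e \<Longrightarrow> set \<gamma> \<subseteq> E - Et"
  unfolding Gamma_def walk_GA_def by auto

lemma ppE: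
  assumes "e \<in> E" "\<eta> \<subseteq> E - {e}"
  shows "\<exists>c. (c = p \<or> c = p') \<and> ((\<exists>\<gamma>\<in>Gamma V E ends \<alpha> Et e. set \<gamma> \<subseteq> \<eta>) \<longrightarrow> c = p) \<and>
     w (insert e \<eta>) = c * (w (insert e \<eta>) + w \<eta>)"
proof -
  obtain c where c: "c = p \<or> c = p / (p + q * (1 - p))"
    "(fst (ends e), snd (ends e)) \<in> (crel V ends \<alpha> \<eta>)\<^sup>* \<longrightarrow> c = p"
    "fk_weight V E ends \<alpha> p q (insert e \<eta>) = c * (fk_weight V E ends \<alpha> p q (insert e \<eta>) + fk_weight V E ends \<alpha> p q \<eta>)"
    using pp[OF fV fE endsV assms p0 p1 q0, of \<alpha>] by blast
  have "(\<exists>\<gamma>\<in>Gamma V E ends \<alpha> Et e. set \<gamma> \<subseteq> \<eta>) \<longrightarrow> c = p"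
  proof
    assume "\<exists>\<gamma>\<in>Gamma V E ends \<alpha> Et e. set \<gamma> \<subseteq> \<eta>"
    then obtain \<gamma> where g: "\<gamma> \<in> Gamma V E ends \<alpha> Et e" "set \<gamma> \<subseteq> \<eta>" by blast
    have wk: "walk_GA V \<alpha> ends (E - Et) (fst (ends e)) (snd (ends e)) \<gamma>" using g(1) unfolding Gamma_def by simp
    have ev: "\<forall>f\<in>\<eta>. fst (ends f) \<in> V \<and> snd (ends f) \<in> V" using endsV assms(2) by auto
    have "(fst (ends e), snd (ends e)) \<in> (crel V ends \<alpha> \<eta>)\<^sup>*"
      using walk_rel[OF part wk g(2) _ _ ev] endsV assms(1) by auto
    then show "c = p" using c(2) by simp
  qed
  then show ?thesis using c(1,3) unfolding w_eq p'_eq by blast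
qed

lemma LB:
  assumes "f \<in> E" "\<zeta> \<subseteq> E - {f}"
  shows "min p p' * (w (insert f \<zeta>) + w \<zeta>) \<le> w (insert f \<zeta>)"
proof -
  obtain c where c: "c = p \<or> c = p'" "w (insert f \<zeta>) = c * (w (insert f \<zeta>) + w \<zeta>)"
    using ppE[OF assms] by blast
  have "min p p' \<le> c" using c(1) by auto
  then show ?thesis using c(2) wnn[of "insert f \<zeta>"] wnn[of \<zeta>]
    by (metis add_nonneg_nonneg mult_right_mono)
qed

lemma UB:
  assumes "f \<in> E" "\<zeta> \<subseteq> E - {f}"
  shows "w (insert f \<zeta>) \<le> max p p' * (w (insert f \<zeta>) + w \<zeta>)"
proof -
  obtain c where c: "c = p \<or> c = p'" "w (insert f \<zeta>) = c * (w (insert f \<zeta>) + w \<zeta>)"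
    using ppE[OF assms] by blast
  have "c \<le> max p p'" using c(1) by auto
  then show ?thesis using c(2) wnn[of "insert f \<zeta>"] wnn[of \<zeta>]
    by (metis add_nonneg_nonneg mult_right_mono)
qed

end



context fkset
begin

lemma C_mono: "(\<exists>\<gamma>\<in>Gamma V E ends \<alpha> Et e. set \<gamma> \<subseteq> \<omega>) \<Longrightarrow> \<omega> \<subseteq> \<omega>' \<Longrightarrow> (\<exists>\<gamma>\<in>Gamma V E ends \<alpha> Et e. set \<gamma> \<subseteq> \<omega>')"
  by blast

lemma C_restr: "E - Et \<subseteq> F \<Longrightarrow> (\<exists>\<gamma>\<in>Gamma V E ends \<alpha> Et e. set \<gamma> \<subseteq> \<omega>) = (\<exists>\<gamma>\<in>Gamma V E ends \<alpha> Et e. set \<gamma> \<subseteq> \<omega> \<inter> F)"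
  using Gamma_sub by blast

lemma inner:
  assumes eEt: "e \<in> Et" and KEt: "K \<subseteq> Et" and eK: "e \<notin> K" and sK: "\<sigma> \<subseteq> K"
  shows "prod_prob E (\<lambda>_. min p p') {\<omega>\<in>Pow E. \<exists>\<gamma>\<in>Gamma V E ends \<alpha> Et e. set \<gamma> \<subseteq> \<omega>}
           * sum (\<lambda>\<eta>. w (insert e \<eta>) + w \<eta>) {\<eta>\<in>Pow (E - {e}). \<eta> \<inter> K = \<sigma>}
         \<le> sum (\<lambda>\<eta>. w (insert e \<eta>) + w \<eta>) {\<eta>\<in>Pow (E - {e}). \<eta> \<inter> K = \<sigma> \<and> (\<exists>\<gamma>\<in>Gamma V E ends \<alpha> Et e. set \<gamma> \<subseteq> \<eta>)}"
proof -
  define T where "T \<eta> = w (insert e \<eta>) + w \<eta>" for \<eta>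
  define Ce where "Ce \<omega> \<longleftrightarrow> (\<exists>\<gamma>\<in>Gamma V E ends \<alpha> Et e. set \<gamma> \<subseteq> \<omega>)" for \<omega>
  define m where "m = min p p'"
  have m01: "0 \<le> m" "m \<le> 1" unfolding m_def using p0 p1 p'01 by auto
  have eE: "e \<in> E" using eEt EtE by auto
  obtain L' where L': "set L' = E - {e} - K" "distinct L'"
    using finite_distinct_list[of "E - {e} - K"] fE by auto
  let ?E0 = "E - {e}"
  let ?A = "{\<tau>\<in>Pow ?E0. Ce \<tau>}"
  have finE0: "finite ?E0" using fE by simp
  have dj: "set L' \<inter> K = {}" using L' by auto
  have sub: "K \<union> set L' \<subseteq> ?E0" using L' KEt EtE eK by auto
  have KL: "K \<union> set L' = ?E0" using L' KEt EtE eK by auto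
  have Tnn: "\<forall>\<omega>\<in>Pow ?E0. 0 \<le> T \<omega>" unfolding T_def using wnn by (simp add: add_nonneg_nonneg)
  have r01: "\<forall>f\<in>set L'. 0 \<le> m \<and> m \<le> 1" using m01 by simp
  have mono: "\<forall>\<omega> \<omega>'. \<omega> \<in> ?A \<longrightarrow> \<omega> \<subseteq> \<omega>' \<longrightarrow> \<omega>' \<subseteq> K \<union> set L' \<longrightarrow> \<omega>' \<in> ?A"
  proof (intro allI impI)
    fix \<omega> \<omega>' assume h: "\<omega> \<in> ?A" "\<omega> \<subseteq> \<omega>'" "\<omega>' \<subseteq> K \<union> set L'"
    have "Ce \<omega>" using h(1) by simp
    then have "Ce \<omega>'" unfolding Ce_def using h(2) by (rule C_mono)
    then show "\<omega>' \<in> ?A" using h(3) KL by auto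
  qed
  have cond: "\<forall>L1 f L2. L' = L1 @ f # L2 \<longrightarrow> (\<forall>\<sigma>'. \<sigma>' \<subseteq> K \<union> set L1 \<longrightarrow>
        m * sum T {\<omega>\<in>Pow ?E0. \<omega> \<inter> (K \<union> set L1) = \<sigma>'}
          \<le> sum T {\<omega>\<in>Pow ?E0. \<omega> \<inter> insert f (K \<union> set L1) = insert f \<sigma>'})"
  proof (intro allI impI)
    fix L1 f L2 \<sigma>' assume h: "L' = L1 @ f # L2" "\<sigma>' \<subseteq> K \<union> set L1"
    have fL: "f \<in> set L'" using h by simp
    have fE0: "f \<in> ?E0" using fL L' by auto
    have fn: "f \<notin> K \<union> set L1" using h L' dj by auto
    let ?Q = "{\<zeta>\<in>Pow (?E0 - {f}). \<zeta> \<inter> (K \<union> set L1) = \<sigma>'}"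
    have s1: "sum T {\<omega>\<in>Pow ?E0. \<omega> \<inter> insert f (K \<union> set L1) = insert f \<sigma>'} = sum (\<lambda>\<zeta>. T (insert f \<zeta>)) ?Q"
      by (rule pair_split(1)[OF finE0 fE0 fn h(2)])
    have s0: "sum T {\<omega>\<in>Pow ?E0. \<omega> \<inter> (K \<union> set L1) = \<sigma>'} = sum (\<lambda>\<zeta>. T (insert f \<zeta>) + T \<zeta>) ?Q"
      by (rule pair_split(2)[OF finE0 fE0 fn h(2)])
    have per: "m * (T (insert f \<zeta>) + T \<zeta>) \<le> T (insert f \<zeta>)" if z: "\<zeta> \<in> ?Q" for \<zeta>
    proof -
      have fE: "f \<in> E" using fE0 by simp
      have z1: "\<zeta> \<subseteq> E - {f}" using z by auto
      have z2: "insert e \<zeta> \<subseteq> E - {f}" using z fE0 eE by auto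
      have a1: "m * (w (insert f \<zeta>) + w \<zeta>) \<le> w (insert f \<zeta>)" unfolding m_def by (rule LB[OF fE z1])
      have a2: "m * (w (insert f (insert e \<zeta>)) + w (insert e \<zeta>)) \<le> w (insert f (insert e \<zeta>))" unfolding m_def by (rule LB[OF fE z2])
      have comm: "insert e (insert f \<zeta>) = insert f (insert e \<zeta>)" by auto
      show ?thesis unfolding T_def comm using a1 a2 by (simp add: algebra_simps)
    qed
    have "m * sum (\<lambda>\<zeta>. T (insert f \<zeta>) + T \<zeta>) ?Q \<le> sum (\<lambda>\<zeta>. T (insert f \<zeta>)) ?Q"
      unfolding sum_distrib_left using per by (intro sum_mono) auto
    then show "m * sum T {\<omega>\<in>Pow ?E0. \<omega> \<inter> (K \<union> set L1) = \<sigma>'}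
          \<le> sum T {\<omega>\<in>Pow ?E0. \<omega> \<inter> insert f (K \<union> set L1) = insert f \<sigma>'}"
      unfolding s0 s1 .
  qed
  have G: "sum T {\<omega>\<in>Pow ?E0. \<omega> \<inter> K = \<sigma>} * prod_prob (set L') (\<lambda>_. m) {\<tau>\<in>Pow (set L'). \<sigma> \<union> \<tau> \<in> ?A}
     \<le> sum T {\<omega>\<in>Pow ?E0. \<omega> \<inter> K = \<sigma> \<and> \<omega> \<inter> (K \<union> set L') \<in> ?A}"
    by (rule gen_lower[OF finE0 L'(2) dj sub Tnn r01 mono cond sK])
  have set1: "{\<omega>\<in>Pow ?E0. \<omega> \<inter> K = \<sigma> \<and> \<omega> \<inter> (K \<union> set L') \<in> ?A} = {\<eta>\<in>Pow ?E0. \<eta> \<inter> K = \<sigma> \<and> Ce \<eta>}"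
    unfolding KL by (auto simp: inf.absorb1)
  have set2: "{\<tau>\<in>Pow (set L'). \<sigma> \<union> \<tau> \<in> ?A} = {\<tau>\<in>Pow (set L'). Ce \<tau>}"
  proof -
    have "Ce (\<sigma> \<union> \<tau>) = Ce \<tau>" if "\<tau> \<subseteq> set L'" for \<tau>
    proof -
      have "Ce (\<sigma> \<union> \<tau>) = Ce ((\<sigma> \<union> \<tau>) \<inter> (E - Et))" unfolding Ce_def by (rule C_restr) simp
      also have "(\<sigma> \<union> \<tau>) \<inter> (E - Et) = \<tau> \<inter> (E - Et)" using sK KEt by auto
      also have "Ce (\<tau> \<inter> (E - Et)) = Ce \<tau>" unfolding Ce_def by (rule C_restr[symmetric]) simp
      finally show ?thesis .
    qed
    moreover have "\<sigma> \<union> \<tau> \<subseteq> ?E0" if "\<tau> \<subseteq> set L'" for \<tau> using that sK sub by auto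
    ultimately show ?thesis by auto
  qed
  have marg: "prod_prob E (\<lambda>_. m) {\<omega>\<in>Pow E. Ce \<omega>} = prod_prob (set L') (\<lambda>_. m) {\<tau>\<in>Pow (set L'). Ce \<tau>}"
  proof -
    have EE: "E = set L' \<union> insert e K" using L' KEt EtE eE by auto
    have r: "\<And>\<omega>. Ce \<omega> = Ce (\<omega> \<inter> set L')" unfolding Ce_def
      by (rule C_restr) (use L' KEt eEt in auto)
    have fin: "finite (insert e K)" using finite_subset[OF order_trans[OF KEt EtE] fE] by simp
    have fL: "finite (set L')" by simp
    have djj: "insert e K \<inter> set L' = {}" using L' by auto
    have "prod_prob (set L' \<union> insert e K) (\<lambda>_. m) {\<omega>\<in>Pow (set L' \<union> insert e K). Ce \<omega>}
       = prod_prob (set L') (\<lambda>_. m) {\<tau>\<in>Pow (set L'). Ce \<tau>}"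
      by (rule prod_prob_marg[where P=Ce and F="set L'" and D="insert e K", OF fin fL djj r])
    then show ?thesis unfolding EE[symmetric] .
  qed
  show ?thesis
    using G unfolding set1 set2 marg[symmetric] T_def[symmetric] Ce_def[symmetric] m_def[symmetric]
    by (simp add: mult.commute)
qed

end



context fkset
begin

definition PC :: "'e \<Rightarrow> real" where
  "PC f = prod_prob E (\<lambda>_. min p p') {\<omega>\<in>Pow E. \<exists>\<gamma>\<in>Gamma V E ends \<alpha> Et f. set \<gamma> \<subseteq> \<omega>}"

lemma PC01: "0 \<le> PC f" "PC f \<le> 1"
proof -
  have m: "\<forall>e\<in>E. 0 \<le> min p p' \<and> min p p' \<le> 1" using p0 p1 p'01 by auto
  show "0 \<le> PC f" unfolding PC_def by (rule prod_prob_nonneg[OF m])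
  have "PC f \<le> prod_prob E (\<lambda>_. min p p') (Pow E)" unfolding PC_def
    by (rule prod_prob_mono[OF m]) (use fE in auto)
  then show "PC f \<le> 1" using prod_prob_total[OF fE] by simp
qed

lemma per_eta:
  assumes "f \<in> E" "\<eta> \<subseteq> E - {f}"
  shows "w (insert f \<eta>) \<le> max p p' * (w (insert f \<eta>) + w \<eta>) - (max p p' - p) *
           (if (\<exists>\<gamma>\<in>Gamma V E ends \<alpha> Et f. set \<gamma> \<subseteq> \<eta>) then w (insert f \<eta>) + w \<eta> else 0)"
    and "min p p' * (w (insert f \<eta>) + w \<eta>) + (p - min p p') *
           (if (\<exists>\<gamma>\<in>Gamma V E ends \<alpha> Et f. set \<gamma> \<subseteq> \<eta>) then w (insert f \<eta>) + w \<eta> else 0) \<le> w (insert f \<eta>)"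
proof -
  obtain c where c: "c = p \<or> c = p'" "(\<exists>\<gamma>\<in>Gamma V E ends \<alpha> Et f. set \<gamma> \<subseteq> \<eta>) \<longrightarrow> c = p"
     "w (insert f \<eta>) = c * (w (insert f \<eta>) + w \<eta>)"
    using ppE[OF assms] by blast
  let ?T = "w (insert f \<eta>) + w \<eta>"
  let ?C = "\<exists>\<gamma>\<in>Gamma V E ends \<alpha> Et f. set \<gamma> \<subseteq> \<eta>"
  have Tn: "0 \<le> ?T" using wnn[of "insert f \<eta>"] wnn[of \<eta>] by simp
  have cm: "c \<le> max p p'" "min p p' \<le> c" using c(1) by auto
  have u: "c * ?T \<le> max p p' * ?T" by (rule mult_right_mono[OF cm(1) Tn])
  have l: "min p p' * ?T \<le> c * ?T" by (rule mult_right_mono[OF cm(2) Tn])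
  have e1: "max p p' * ?T - (max p p' - p) * ?T = p * ?T" by (simp add: algebra_simps)
  have e2: "min p p' * ?T + (p - min p p') * ?T = p * ?T" by (simp add: algebra_simps)
  show "w (insert f \<eta>) \<le> max p p' * ?T - (max p p' - p) * (if ?C then ?T else 0)"
  proof (cases ?C)
    case True then have "c = p" using c(2) by simp
    then show ?thesis using True c(3) e1 by simp
  next
    case False then show ?thesis using c(3) u by simp
  qed
  show "min p p' * ?T + (p - min p p') * (if ?C then ?T else 0) \<le> w (insert f \<eta>)"
  proof (cases ?C)
    case True then have "c = p" using c(2) by simp
    then show ?thesis using True c(3) e2 by simp
  next
    case False then show ?thesis using c(3) l by simp
  qed
qed

lemma prefix_sub:
  assumes "distinct (Lt @ Lr)" "Lt @ Lr = L1 @ f # L2" "f \<in> set Lt"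
  shows "set L1 \<subseteq> set Lt"
proof -
  obtain us where "(Lt = L1 @ us \<and> us @ Lr = f # L2) \<or> (Lt @ us = L1 \<and> Lr = us @ f # L2)"
    using append_eq_append_conv2[THEN iffD1, OF assms(2)] by (elim exE) simp
  then show ?thesis
  proof
    assume "Lt = L1 @ us \<and> us @ Lr = f # L2" then show ?thesis by auto
  next
    assume h: "Lt @ us = L1 \<and> Lr = us @ f # L2"
    then have "f \<in> set Lr" by auto
    then show ?thesis using assms(1,3) by auto
  qed
qed

lemma Wpos:
  assumes "0 < p" "p < 1"
  shows "0 < sum w (Pow E)"
proof -
  have "\<forall>\<omega>\<in>Pow E. 0 < w \<omega>" unfolding w_eq using fkw_pos[OF assms q0] by auto
  then show ?thesis by (intro sum_pos) (use fE in auto)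
qed

lemma setL_simps:
  assumes "A \<subseteq> Pow E" "set L = E"
  shows "{\<omega>\<in>Pow E. \<omega> \<inter> {} = {} \<and> \<omega> \<inter> ({} \<union> set L) \<in> A} = A"
    and "{\<omega>\<in>Pow E. \<omega> \<inter> {} = {}} = Pow E"
    and "{\<tau>\<in>Pow (set L). {} \<union> \<tau> \<in> A} = A"
  using assms by (auto simp: inf.absorb1)

end



context fkset
begin

lemma case1:
  assumes lt: "p < p'" and A: "increasing_event E A"
  shows "fk_prob V E ends \<alpha> p q A \<le> prod_prob E (\<lambda>f. p' - (if f \<in> Et then \<bar>p' - p\<bar> * PC f else 0)) A"
proof -
  define r where "r f = p' - (if f \<in> Et then \<bar>p' - p\<bar> * PC f else 0)" for f
  have pp: "0 < p" "p < 1"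
  proof -
    show "0 < p" proof (rule ccontr)
      assume "\<not> 0 < p" then have "p = 0" using p0 by simp
      then show False using lt unfolding p'_eq by simp
    qed
    show "p < 1" proof (rule ccontr)
      assume "\<not> p < 1" then have "p = 1" using p1 by simp
      then show False using lt unfolding p'_eq by simp
    qed
  qed
  have mx: "max p p' = p'" "min p p' = p" "\<bar>p' - p\<bar> = p' - p" using lt by auto
  have r01: "\<forall>f\<in>set L. 0 \<le> r f \<and> r f \<le> 1" for L
  proof
    fix f
    have "0 \<le> (p' - p) * PC f" "(p' - p) * PC f \<le> p' - p" using PC01[of f] lt
      by (auto simp: mult_le_cancel_left1)
    then show "0 \<le> r f \<and> r f \<le> 1" unfolding r_def mx using p'01 p0 by auto
  qed
  obtain Lt where Lt: "set Lt = Et" "distinct Lt" using finite_distinct_list finite_subset[OF EtE fE] by blast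
  obtain Lr where Lr: "set Lr = E - Et" "distinct Lr" using finite_distinct_list fE by (metis finite_Diff)
  define L where "L = Lt @ Lr"
  have L: "set L = E" "distinct L" unfolding L_def using Lt Lr EtE by auto
  have Apow: "A \<subseteq> Pow E" using A unfolding increasing_event_def by simp
  have mono: "\<forall>\<omega> \<omega>'. \<omega> \<in> A \<longrightarrow> \<omega> \<subseteq> \<omega>' \<longrightarrow> \<omega>' \<subseteq> {} \<union> set L \<longrightarrow> \<omega>' \<in> A"
    using A L(1) unfolding increasing_event_def by auto
  have wnn': "\<forall>\<omega>\<in>Pow E. 0 \<le> w \<omega>" using wnn by simp
  have cond: "\<forall>L1 f L2. L = L1 @ f # L2 \<longrightarrow> (\<forall>\<sigma>. \<sigma> \<subseteq> {} \<union> set L1 \<longrightarrow>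
        sum w {\<omega>\<in>Pow E. \<omega> \<inter> insert f ({} \<union> set L1) = insert f \<sigma>}
          \<le> r f * sum w {\<omega>\<in>Pow E. \<omega> \<inter> ({} \<union> set L1) = \<sigma>})"
  proof (intro allI impI)
    fix L1 f L2 \<sigma> assume h: "L = L1 @ f # L2" "\<sigma> \<subseteq> {} \<union> set L1"
    let ?K = "set L1"
    have sK: "\<sigma> \<subseteq> ?K" using h(2) by simp
    have fE': "f \<in> E" using h(1) L(1) by auto
    have fn: "f \<notin> ?K" using h(1) L(2) by auto
    let ?Q = "{\<eta>\<in>Pow (E - {f}). \<eta> \<inter> ?K = \<sigma>}"
    let ?T = "\<lambda>\<eta>. w (insert f \<eta>) + w \<eta>"
    let ?C = "\<lambda>\<eta>. \<exists>\<gamma>\<in>Gamma V E ends \<alpha> Et f. set \<gamma> \<subseteq> \<eta>"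
    have s1: "sum w {\<omega>\<in>Pow E. \<omega> \<inter> insert f ?K = insert f \<sigma>} = sum (\<lambda>\<eta>. w (insert f \<eta>)) ?Q"
      by (rule pair_split(1)[OF fE fE' fn sK])
    have s0: "sum w {\<omega>\<in>Pow E. \<omega> \<inter> ?K = \<sigma>} = sum ?T ?Q"
      by (rule pair_split(2)[OF fE fE' fn sK])
    have finQ: "finite ?Q" using fE by simp
    have main: "sum (\<lambda>\<eta>. w (insert f \<eta>)) ?Q \<le> r f * sum ?T ?Q"
    proof (cases "f \<in> Et")
      case True
      have KEt: "?K \<subseteq> Et" using prefix_sub[of Lt Lr L1 f L2] h(1) L(2) Lt(1) True unfolding L_def by auto
      have "sum (\<lambda>\<eta>. w (insert f \<eta>)) ?Q \<le> sum (\<lambda>\<eta>. p' * ?T \<eta> - (p' - p) * (if ?C \<eta> then ?T \<eta> else 0)) ?Q"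
        using per_eta(1)[OF fE'] unfolding mx by (intro sum_mono) auto
      also have "\<dots> = p' * sum ?T ?Q - (p' - p) * sum (\<lambda>\<eta>. if ?C \<eta> then ?T \<eta> else 0) ?Q"
        by (simp add: sum_subtractf sum_distrib_left)
      also have "sum (\<lambda>\<eta>. if ?C \<eta> then ?T \<eta> else 0) ?Q = sum ?T {\<eta>\<in>Pow (E - {f}). \<eta> \<inter> ?K = \<sigma> \<and> ?C \<eta>}"
      proof -
        have "{\<eta>\<in>Pow (E - {f}). \<eta> \<inter> ?K = \<sigma> \<and> ?C \<eta>} = {\<eta>\<in>?Q. ?C \<eta>}" by auto
        then show ?thesis using sum.inter_filter[OF finQ, of ?T ?C] by simp
      qed
      also have "p' * sum ?T ?Q - (p' - p) * sum ?T {\<eta>\<in>Pow (E - {f}). \<eta> \<inter> ?K = \<sigma> \<and> ?C \<eta>}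
          \<le> p' * sum ?T ?Q - (p' - p) * (PC f * sum ?T ?Q)"
      proof -
        have "PC f * sum ?T ?Q \<le> sum ?T {\<eta>\<in>Pow (E - {f}). \<eta> \<inter> ?K = \<sigma> \<and> ?C \<eta>}"
          using inner[OF True KEt fn sK] unfolding PC_def .
        then show ?thesis using lt by (simp add: mult_left_mono)
      qed
      also have "\<dots> = r f * sum ?T ?Q" unfolding r_def mx using True by (simp add: algebra_simps)
      finally show ?thesis .
    next
      case False
      have "sum (\<lambda>\<eta>. w (insert f \<eta>)) ?Q \<le> sum (\<lambda>\<eta>. p' * ?T \<eta>) ?Q"
      proof (rule sum_mono)
        fix \<eta> assume "\<eta> \<in> ?Q"
        then have e: "\<eta> \<subseteq> E - {f}" by simp
        show "w (insert f \<eta>) \<le> p' * ?T \<eta>" using UB[OF fE' e] unfolding mx .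
      qed
      also have "\<dots> = r f * sum ?T ?Q" unfolding r_def using False by (simp add: sum_distrib_left)
      finally show ?thesis .
    qed
    show "sum w {\<omega>\<in>Pow E. \<omega> \<inter> insert f ({} \<union> set L1) = insert f \<sigma>}
          \<le> r f * sum w {\<omega>\<in>Pow E. \<omega> \<inter> ({} \<union> set L1) = \<sigma>}"
      using main unfolding s1[symmetric] s0[symmetric] by simp
  qed
  have G: "sum w {\<omega>\<in>Pow E. \<omega> \<inter> {} = {} \<and> \<omega> \<inter> ({} \<union> set L) \<in> A}
     \<le> sum w {\<omega>\<in>Pow E. \<omega> \<inter> {} = {}} * prod_prob (set L) r {\<tau>\<in>Pow (set L). {} \<union> \<tau> \<in> A}"
    by (rule gen_upper[OF fE L(2) _ _ wnn' r01 mono cond]) (use L in auto)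
  have G': "sum w A \<le> sum w (Pow E) * prod_prob E r A"
    using G unfolding setL_simps[OF Apow L(1)] by (simp only: L(1))
  have W: "0 < sum w (Pow E)" by (rule Wpos[OF pp])
  have "fk_prob V E ends \<alpha> p q A = sum w A / sum w (Pow E)"
    unfolding fk_prob_def w_eq ..
  also have "\<dots> \<le> prod_prob E r A" using G' W by (simp add: divide_le_eq mult.commute)
  finally show ?thesis unfolding r_def .
qed

end



context fkset
begin

lemma case2:
  assumes lt: "p' < p" and A: "increasing_event E A"
  shows "prod_prob E (\<lambda>f. p' + (if f \<in> Et then \<bar>p' - p\<bar> * PC f else 0)) A \<le> fk_prob V E ends \<alpha> p q A"
proof -
  define r where "r f = p' + (if f \<in> Et then \<bar>p' - p\<bar> * PC f else 0)" for f
  have pp: "0 < p" "p < 1"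
  proof -
    show "0 < p" proof (rule ccontr)
      assume "\<not> 0 < p" then have "p = 0" using p0 by simp
      then show False using lt unfolding p'_eq by simp
    qed
    show "p < 1" proof (rule ccontr)
      assume "\<not> p < 1" then have "p = 1" using p1 by simp
      then show False using lt unfolding p'_eq by simp
    qed
  qed
  have mx: "max p p' = p" "min p p' = p'" "\<bar>p' - p\<bar> = p - p'" using lt by auto
  have r01: "\<forall>f\<in>set L. 0 \<le> r f \<and> r f \<le> 1" for L
  proof
    fix f
    have "0 \<le> (p - p') * PC f" "(p - p') * PC f \<le> p - p'" using PC01[of f] lt
      by (auto simp: mult_le_cancel_left1)
    then show "0 \<le> r f \<and> r f \<le> 1" unfolding r_def mx using p'01 p1 by auto
  qed
  obtain Lt where Lt: "set Lt = Et" "distinct Lt" using finite_distinct_list finite_subset[OF EtE fE] by blast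
  obtain Lr where Lr: "set Lr = E - Et" "distinct Lr" using finite_distinct_list fE by (metis finite_Diff)
  define L where "L = Lt @ Lr"
  have L: "set L = E" "distinct L" unfolding L_def using Lt Lr EtE by auto
  have Apow: "A \<subseteq> Pow E" using A unfolding increasing_event_def by simp
  have mono: "\<forall>\<omega> \<omega>'. \<omega> \<in> A \<longrightarrow> \<omega> \<subseteq> \<omega>' \<longrightarrow> \<omega>' \<subseteq> {} \<union> set L \<longrightarrow> \<omega>' \<in> A"
    using A L(1) unfolding increasing_event_def by auto
  have wnn': "\<forall>\<omega>\<in>Pow E. 0 \<le> w \<omega>" using wnn by simp
  have cond: "\<forall>L1 f L2. L = L1 @ f # L2 \<longrightarrow> (\<forall>\<sigma>. \<sigma> \<subseteq> {} \<union> set L1 \<longrightarrow>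
        r f * sum w {\<omega>\<in>Pow E. \<omega> \<inter> ({} \<union> set L1) = \<sigma>}
          \<le> sum w {\<omega>\<in>Pow E. \<omega> \<inter> insert f ({} \<union> set L1) = insert f \<sigma>})"
  proof (intro allI impI)
    fix L1 f L2 \<sigma> assume h: "L = L1 @ f # L2" "\<sigma> \<subseteq> {} \<union> set L1"
    let ?K = "set L1"
    have sK: "\<sigma> \<subseteq> ?K" using h(2) by simp
    have fE': "f \<in> E" using h(1) L(1) by auto
    have fn: "f \<notin> ?K" using h(1) L(2) by auto
    let ?Q = "{\<eta>\<in>Pow (E - {f}). \<eta> \<inter> ?K = \<sigma>}"
    let ?T = "\<lambda>\<eta>. w (insert f \<eta>) + w \<eta>"
    let ?C = "\<lambda>\<eta>. \<exists>\<gamma>\<in>Gamma V E ends \<alpha> Et f. set \<gamma> \<subseteq> \<eta>"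
    have s1: "sum w {\<omega>\<in>Pow E. \<omega> \<inter> insert f ?K = insert f \<sigma>} = sum (\<lambda>\<eta>. w (insert f \<eta>)) ?Q"
      by (rule pair_split(1)[OF fE fE' fn sK])
    have s0: "sum w {\<omega>\<in>Pow E. \<omega> \<inter> ?K = \<sigma>} = sum ?T ?Q"
      by (rule pair_split(2)[OF fE fE' fn sK])
    have finQ: "finite ?Q" using fE by simp
    have main: "r f * sum ?T ?Q \<le> sum (\<lambda>\<eta>. w (insert f \<eta>)) ?Q"
    proof (cases "f \<in> Et")
      case True
      have KEt: "?K \<subseteq> Et" using prefix_sub[of Lt Lr L1 f L2] h(1) L(2) Lt(1) True unfolding L_def by auto
      have "r f * sum ?T ?Q = p' * sum ?T ?Q + (p - p') * (PC f * sum ?T ?Q)"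
        unfolding r_def mx using True by (simp add: algebra_simps)
      also have "\<dots> \<le> p' * sum ?T ?Q + (p - p') * sum ?T {\<eta>\<in>Pow (E - {f}). \<eta> \<inter> ?K = \<sigma> \<and> ?C \<eta>}"
      proof -
        have "PC f * sum ?T ?Q \<le> sum ?T {\<eta>\<in>Pow (E - {f}). \<eta> \<inter> ?K = \<sigma> \<and> ?C \<eta>}"
          using inner[OF True KEt fn sK] unfolding PC_def .
        then show ?thesis using lt by (simp add: mult_left_mono)
      qed
      also have "sum ?T {\<eta>\<in>Pow (E - {f}). \<eta> \<inter> ?K = \<sigma> \<and> ?C \<eta>} = sum (\<lambda>\<eta>. if ?C \<eta> then ?T \<eta> else 0) ?Q"
      proof -
        have "{\<eta>\<in>Pow (E - {f}). \<eta> \<inter> ?K = \<sigma> \<and> ?C \<eta>} = {\<eta>\<in>?Q. ?C \<eta>}" by auto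
        then show ?thesis using sum.inter_filter[OF finQ, of ?T ?C] by simp
      qed
      also have "p' * sum ?T ?Q + (p - p') * sum (\<lambda>\<eta>. if ?C \<eta> then ?T \<eta> else 0) ?Q
          = sum (\<lambda>\<eta>. p' * ?T \<eta>) ?Q + sum (\<lambda>\<eta>. (p - p') * (if ?C \<eta> then ?T \<eta> else 0)) ?Q"
        by (simp only: sum_distrib_left)
      also have "\<dots> = sum (\<lambda>\<eta>. p' * ?T \<eta> + (p - p') * (if ?C \<eta> then ?T \<eta> else 0)) ?Q"
        by (rule sum.distrib[symmetric])
      also have "\<dots> \<le> sum (\<lambda>\<eta>. w (insert f \<eta>)) ?Q"
        using per_eta(2)[OF fE'] unfolding mx by (intro sum_mono) auto
      finally show ?thesis .
    next
      case False
      have rf: "r f = p'" unfolding r_def using False by simp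
      have "r f * sum ?T ?Q = sum (\<lambda>\<eta>. p' * ?T \<eta>) ?Q" by (simp only: rf sum_distrib_left)
      also have "\<dots> \<le> sum (\<lambda>\<eta>. w (insert f \<eta>)) ?Q"
      proof (rule sum_mono)
        fix \<eta> assume "\<eta> \<in> ?Q"
        then have e: "\<eta> \<subseteq> E - {f}" by simp
        show "p' * ?T \<eta> \<le> w (insert f \<eta>)" using LB[OF fE' e] unfolding mx .
      qed
      finally show ?thesis .
    qed
    show "r f * sum w {\<omega>\<in>Pow E. \<omega> \<inter> ({} \<union> set L1) = \<sigma>}
          \<le> sum w {\<omega>\<in>Pow E. \<omega> \<inter> insert f ({} \<union> set L1) = insert f \<sigma>}"
      using main unfolding s1[symmetric] s0[symmetric] by simp
  qed
  have G: "sum w {\<omega>\<in>Pow E. \<omega> \<inter> {} = {}} * prod_prob (set L) r {\<tau>\<in>Pow (set L). {} \<union> \<tau> \<in> A}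
     \<le> sum w {\<omega>\<in>Pow E. \<omega> \<inter> {} = {} \<and> \<omega> \<inter> ({} \<union> set L) \<in> A}"
    by (rule gen_lower[OF fE L(2) _ _ wnn' r01 mono cond]) (use L in auto)
  have G': "sum w (Pow E) * prod_prob E r A \<le> sum w A"
    using G unfolding setL_simps[OF Apow L(1)] by (simp only: L(1))
  have W: "0 < sum w (Pow E)" by (rule Wpos[OF pp])
  have "prod_prob E r A \<le> sum w A / sum w (Pow E)" using G' W by (simp add: le_divide_eq mult.commute)
  also have "\<dots> = fk_prob V E ends \<alpha> p q A"
    unfolding fk_prob_def w_eq ..
  finally show ?thesis unfolding r_def .
qed

end


theorem proposition3p2:
  fixes V :: "'v set" and E :: "'e set" and ends :: "'e \<Rightarrow> 'v \<times> 'v"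
    and B :: "'v set" and \<alpha> :: "'v set set" and p q :: real and Et :: "'e set"
  assumes "finite V" and "finite E"
    and "\<forall>e\<in>E. fst (ends e) \<in> V \<and> snd (ends e) \<in> V"
    and "graph_connected V E ends"
    and "B \<subseteq> V" and "partition_on B \<alpha>"
    and "0 \<le> p" and "p \<le> 1" and "q > 0"
    and "Et \<subseteq> E"
    and "\<forall>e\<in>Et. Gamma V E ends \<alpha> Et e \<noteq> {}"
  defines "p' \<equiv> p / (p + q * (1 - p))"
  defines "eps \<equiv> (\<lambda>e. \<bar>p' - p\<bar> * prod_prob E (\<lambda>_. min p p')
              {\<omega> \<in> Pow E. \<exists>\<gamma>\<in>Gamma V E ends \<alpha> Et e. set \<gamma> \<subseteq> \<omega>})"
  shows "(p < p' \<longrightarrow> stoch_le E (fk_prob V E ends \<alpha> p q)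
                        (prod_prob E (\<lambda>e. p' - (if e \<in> Et then eps e else 0))))
       \<and> (p > p' \<longrightarrow> stoch_le E (prod_prob E (\<lambda>e. p' + (if e \<in> Et then eps e else 0)))
                        (fk_prob V E ends \<alpha> p q))"
proof -
  interpret F: fkset V E ends B \<alpha> p q Et p' "fk_weight V E ends \<alpha> p q"
    by unfold_locales (use assms in \<open>auto simp: p'_def\<close>)
  have eps_eq: "eps = (\<lambda>e. \<bar>p' - p\<bar> * F.PC e)" unfolding eps_def F.PC_def by simp
  show ?thesis
  proof (intro conjI impI)
    assume lt: "p < p'"
    show "stoch_le E (fk_prob V E ends \<alpha> p q) (prod_prob E (\<lambda>e. p' - (if e \<in> Et then eps e else 0)))"
      unfolding stoch_le_def eps_eq using F.case1[OF lt] by blast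
  next
    assume lt: "p > p'"
    show "stoch_le E (prod_prob E (\<lambda>e. p' + (if e \<in> Et then eps e else 0))) (fk_prob V E ends \<alpha> p q)"
      unfolding stoch_le_def eps_eq using F.case2[OF lt] by blast
  qed
qed

end
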